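(* Let $d\ge 3$, let $K$ be an algebraically closed field of characteristic $p$ with $p=0$ or $p>d$, let $X_d\subset\mathbb{P}^3(K)$ be a smooth surface of degree $d$, let $L\subset X_d$ be a line, and let $P\in L$ be a point such that the Hessian quadric $V_P$ does not contain the tangent plane $\mathbb{T}_PX_d$. If $L$ is a line of the second kind, then the form $\mathfrak t_P^{(3)}$ vanishes identically on the set-theoretic intersection $\mathbb{T}_PX_d\cap V_P$.
   Context: Let $f$ be a homogeneous defining polynomial of $X_d$. For $P=(p_0:\dots:p_3)$ and $j=1,2,3$ put $\mathfrak t_P^{(j)}(z):=\sum_{0\le i_1,\dots,i_j\le 3}\frac{\partial^j f}{\partial w_{i_1}\cdots\partial w_{i_j}}(p_0,\dots,p_3)\,z_{i_1}\cdots z_{i_j}$. Then $\mathbb{T}_PX_d=V(\mathfrak t_P^{(1)})$ is the projective tangent plane of $X_d$ at $P$ and $V_P=V(\mathfrak t_P^{(2)})$ is the Hessian quadric at $P$. A line $L\subset X_d$ is called a line of the second kind if it meets every plane curve $\Gamma\in|\mathcal O_{X_d}(1)-L|$ (i.e. every curve residual to $L$ in the intersection of $X_d$ with a plane containing $L$) only in inflection points of $\Gamma$; otherwise it is of the first kind. *)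

theory Defs
  imports "HOL-Computational_Algebra.Polynomial"
begin

text \<open>Homogeneous forms of degree d in n variables x_0..x_(n-1), represented by their
coefficient function on exponent vectors (only exponent vectors in mons n d matter).
Points / vectors of K^n are functions nat => K (only indices < n matter).\<close>

definition mons :: "nat \<Rightarrow> nat \<Rightarrow> (nat \<Rightarrow> nat) set" where
  "mons n d = {\<alpha>. (\<forall>i\<ge>n. \<alpha> i = 0) \<and> (\<Sum>i<n. \<alpha> i) = d}"

definition evalf :: "nat \<Rightarrow> nat \<Rightarrow> ((nat \<Rightarrow> nat) \<Rightarrow> 'a::comm_ring_1) \<Rightarrow> (nat \<Rightarrow> 'a) \<Rightarrow> 'a" where
  "evalf n d c x = (\<Sum>\<alpha>\<in>mons n d. c \<alpha> * (\<Prod>i<n. x i ^ \<alpha> i))"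

definition pdf :: "nat \<Rightarrow> ((nat \<Rightarrow> nat) \<Rightarrow> 'a::comm_ring_1) \<Rightarrow> ((nat \<Rightarrow> nat) \<Rightarrow> 'a)" where
  "pdf i c = (\<lambda>\<alpha>. of_nat (\<alpha> i + 1) * c (\<alpha>(i := \<alpha> i + 1)))"

definition pdfs :: "nat list \<Rightarrow> ((nat \<Rightarrow> nat) \<Rightarrow> 'a::comm_ring_1) \<Rightarrow> ((nat \<Rightarrow> nat) \<Rightarrow> 'a)" where
  "pdfs is c = foldr pdf is c"

definition tform :: "nat \<Rightarrow> nat \<Rightarrow> nat \<Rightarrow> ((nat \<Rightarrow> nat) \<Rightarrow> 'a::comm_ring_1) \<Rightarrow> (nat \<Rightarrow> 'a) \<Rightarrow> (nat \<Rightarrow> 'a) \<Rightarrow> 'a" where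
  "tform n d j c P z = (\<Sum>is\<in>{is. length is = j \<and> set is \<subseteq> {..<n}}.
      evalf n (d - j) (pdfs is c) P * prod_list (map z is))"

definition nonzero_vec :: "nat \<Rightarrow> (nat \<Rightarrow> 'a::zero) \<Rightarrow> bool" where
  "nonzero_vec n x \<longleftrightarrow> (\<exists>i<n. x i \<noteq> 0)"

definition indep2 :: "nat \<Rightarrow> (nat \<Rightarrow> 'a::field) \<Rightarrow> (nat \<Rightarrow> 'a) \<Rightarrow> bool" where
  "indep2 n A B \<longleftrightarrow> (\<forall>a b. (\<forall>i<n. a * A i + b * B i = 0) \<longrightarrow> a = 0 \<and> b = 0)"

definition indep3 :: "nat \<Rightarrow> (nat \<Rightarrow> 'a::field) \<Rightarrow> (nat \<Rightarrow> 'a) \<Rightarrow> (nat \<Rightarrow> 'a) \<Rightarrow> bool" where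
  "indep3 n A B C \<longleftrightarrow>
     (\<forall>a b e. (\<forall>i<n. a * A i + b * B i + e * C i = 0) \<longrightarrow> a = 0 \<and> b = 0 \<and> e = 0)"

definition smooth_surface :: "nat \<Rightarrow> ((nat \<Rightarrow> nat) \<Rightarrow> 'a::field) \<Rightarrow> bool" where
  "smooth_surface d c \<longleftrightarrow> (\<exists>\<alpha>\<in>mons 4 d. c \<alpha> \<noteq> 0) \<and>
     (\<forall>x. nonzero_vec 4 x \<and> evalf 4 d c x = 0 \<longrightarrow> (\<exists>i<4. evalf 4 (d - 1) (pdf i c) x \<noteq> 0))"

definition line_on :: "nat \<Rightarrow> ((nat \<Rightarrow> nat) \<Rightarrow> 'a::field) \<Rightarrow> (nat \<Rightarrow> 'a) \<Rightarrow> (nat \<Rightarrow> 'a) \<Rightarrow> bool" where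
  "line_on d c A B \<longleftrightarrow> indep2 4 A B \<and> (\<forall>s t. evalf 4 d c (\<lambda>i. s * A i + t * B i) = 0)"

text \<open>Inflection point Q of the plane curve V(h), h a ternary form of degree e:
  Q lies on the curve and some line through Q (spanned by Q and v) meets the curve
  at Q with multiplicity at least 3, i.e. h(Q + t v) vanishes to order >= 3 at t = 0
  (in characteristic not 2 this is t^(1)_Q(v) = t^(2)_Q(v) = 0).  This covers smooth
  flexes as well as singular points (equivalently: points on the Hessian curve).\<close>
definition inflection_pt :: "nat \<Rightarrow> ((nat \<Rightarrow> nat) \<Rightarrow> 'a::field) \<Rightarrow> (nat \<Rightarrow> 'a) \<Rightarrow> bool" where
  "inflection_pt e h Q \<longleftrightarrow> evalf 3 e h Q = 0 \<and>
     (\<exists>v. indep2 3 Q v \<and> tform 3 e 1 h Q v = 0 \<and> tform 3 e 2 h Q v = 0)"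

text \<open>Line of the second kind: for every plane Pi = span(A,B,C) containing L = span(A,B),
  writing f restricted to Pi in coordinates (x0,x1,x2) as x2 * h with h of degree d-1
  (so that Gamma = V(h) is the residual curve), every point of L (x2 = 0) on Gamma is an
  inflection point of Gamma.\<close>
definition second_kind :: "nat \<Rightarrow> ((nat \<Rightarrow> nat) \<Rightarrow> 'a::field) \<Rightarrow> (nat \<Rightarrow> 'a) \<Rightarrow> (nat \<Rightarrow> 'a) \<Rightarrow> bool" where
  "second_kind d c A B \<longleftrightarrow>
     (\<forall>C h. indep3 4 A B C \<longrightarrow>
        (\<forall>x. evalf 4 d c (\<lambda>i. x 0 * A i + x 1 * B i + x 2 * C i) = x 2 * evalf 3 (d - 1) h x) \<longrightarrow>
        (\<forall>Q. nonzero_vec 3 Q \<and> Q 2 = 0 \<and> evalf 3 (d - 1) h Q = 0 \<longrightarrow> inflection_pt (d - 1) h Q))"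

end

theory Submission
  imports Defs "HOL-Library.FuncSet"
begin


lemma finite_mons: "finite (mons n d)"
proof -
  have "mons n d \<subseteq> (\<lambda>f i. if i < n then f i else 0) ` (PiE {..<n} (\<lambda>_. {..d}))"
  proof
    fix \<alpha> assume a: "\<alpha> \<in> mons n d"
    hence s: "(\<Sum>i<n. \<alpha> i) = d" and z: "\<forall>i\<ge>n. \<alpha> i = 0" by (auto simp: mons_def)
    have le: "\<alpha> i \<le> d" if "i < n" for i
      using member_le_sum[of i "{..<n}" \<alpha>] that s by auto
    let ?f = "restrict \<alpha> {..<n}"
    have "?f \<in> PiE {..<n} (\<lambda>_. {..d})" using le by auto
    moreover have "\<alpha> = (\<lambda>i. if i < n then ?f i else 0)" using z by (auto simp: fun_eq_iff)
    ultimately show "\<alpha> \<in> (\<lambda>f i. if i < n then f i else 0) ` (PiE {..<n} (\<lambda>_. {..d}))" by blast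
  qed
  moreover have "finite (PiE {..<n} (\<lambda>_. {..d::nat}))" by (rule finite_PiE) auto
  ultimately show ?thesis using finite_subset by blast
qed

lemma evalf_cong: "(\<And>i. i < n \<Longrightarrow> x i = y i) \<Longrightarrow> evalf n d c x = evalf n d c y"
  unfolding evalf_def by (intro sum.cong refl arg_cong2[where f="(*)"] prod.cong) auto

lemma evalf_homog: "evalf n d c (\<lambda>i. a * x i) = a ^ d * evalf n d c x"
proof -
  have "c \<alpha> * (\<Prod>i<n. (a * x i) ^ \<alpha> i) = a ^ d * (c \<alpha> * (\<Prod>i<n. x i ^ \<alpha> i))"
    if "\<alpha> \<in> mons n d" for \<alpha>
  proof -
    have "(\<Prod>i<n. (a * x i) ^ \<alpha> i) = (\<Prod>i<n. a ^ \<alpha> i) * (\<Prod>i<n. x i ^ \<alpha> i)"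
      by (simp add: power_mult_distrib prod.distrib)
    also have "(\<Prod>i<n. a ^ \<alpha> i) = a ^ d" using that by (simp add: mons_def power_sum[symmetric])
    finally show ?thesis by simp
  qed
  thus ?thesis unfolding evalf_def by (simp add: sum_distrib_left)
qed

lemma mons_bij:
  assumes "k < n"
  shows "inj_on (\<lambda>\<beta>. \<beta>(k := \<beta> k + 1)) (mons n e)"
    and "(\<lambda>\<beta>. \<beta>(k := \<beta> k + 1)) ` mons n e = {\<alpha> \<in> mons n (Suc e). \<alpha> k \<noteq> 0}"
proof -
  show "inj_on (\<lambda>\<beta>. \<beta>(k := \<beta> k + 1)) (mons n e)"
    by (rule inj_onI) (metis add_right_cancel fun_upd_apply fun_upd_triv fun_upd_upd)
  have sumupd: "(\<Sum>i<n. (\<beta>(k := v)) i) = (\<Sum>i<n. \<beta> i) - \<beta> k + v" if "\<beta> k \<le> (\<Sum>i<n. \<beta> i)" for \<beta> :: "nat \<Rightarrow> nat" and v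
  proof -
    have "(\<Sum>i<n. (\<beta>(k := v)) i) = v + (\<Sum>i\<in>{..<n}-{k}. \<beta> i)"
      using assms by (subst sum.remove[of _ k]) auto
    moreover have "(\<Sum>i<n. \<beta> i) = \<beta> k + (\<Sum>i\<in>{..<n}-{k}. \<beta> i)"
      using assms by (subst sum.remove[of _ k]) auto
    ultimately show ?thesis by simp
  qed
  have kle: "\<beta> k \<le> (\<Sum>i<n. \<beta> i)" for \<beta> :: "nat \<Rightarrow> nat"
    using member_le_sum[of k "{..<n}" \<beta>] assms by auto
  show "(\<lambda>\<beta>. \<beta>(k := \<beta> k + 1)) ` mons n e = {\<alpha> \<in> mons n (Suc e). \<alpha> k \<noteq> 0}"
  proof (intro equalityI subsetI)
    fix \<alpha> assume "\<alpha> \<in> (\<lambda>\<beta>. \<beta>(k := \<beta> k + 1)) ` mons n e"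
    then obtain \<beta> where b: "\<beta> \<in> mons n e" "\<alpha> = \<beta>(k := \<beta> k + 1)" by auto
    show "\<alpha> \<in> {\<alpha> \<in> mons n (Suc e). \<alpha> k \<noteq> 0}"
      using b assms sumupd[of \<beta> "\<beta> k + 1"] kle[of \<beta>] by (auto simp: mons_def)
  next
    fix \<alpha> assume a: "\<alpha> \<in> {\<alpha> \<in> mons n (Suc e). \<alpha> k \<noteq> 0}"
    let ?\<beta> = "\<alpha>(k := \<alpha> k - 1)"
    have "?\<beta> \<in> mons n e"
      using a assms sumupd[of \<alpha> "\<alpha> k - 1"] kle[of \<alpha>] by (auto simp: mons_def)
    moreover have "\<alpha> = ?\<beta>(k := ?\<beta> k + 1)" using a by auto
    ultimately show "\<alpha> \<in> (\<lambda>\<beta>. \<beta>(k := \<beta> k + 1)) ` mons n e" by blast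
  qed
qed



lemma pderiv_sum': "pderiv (sum f A) = (\<Sum>x\<in>A. pderiv (f x))"
  using higher_pderiv_sum[of 1 f A] by simp

lemma smult_sum_right: "smult a (sum f A) = (\<Sum>i\<in>A. smult a (f i))"
  by (induction A rule: infinite_finite_induct) (auto simp: smult_add_right)

lemma pdf_const: "pdf i (\<lambda>\<alpha>. [:c \<alpha>:]) = (\<lambda>\<alpha>. [:pdf i c \<alpha>:])"
  by (simp add: pdf_def fun_eq_iff of_nat_poly)

lemma chain_rule:
  fixes c :: "(nat \<Rightarrow> nat) \<Rightarrow> 'a::field" and x :: "nat \<Rightarrow> 'a poly"
  shows "pderiv (evalf n (Suc e) (\<lambda>\<alpha>. [:c \<alpha>:]) x) =
     (\<Sum>i<n. pderiv (x i) * evalf n e (\<lambda>\<alpha>. [:pdf i c \<alpha>:]) x)"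
proof -
  define f where "f i \<alpha> = of_nat (\<alpha> i) * [:c \<alpha>:] * x i ^ (\<alpha> i - 1) * (\<Prod>j\<in>{..<n}-{i}. x j ^ \<alpha> j)" for i \<alpha>
  have step1: "pderiv ([:c \<alpha>:] * (\<Prod>i<n. x i ^ \<alpha> i)) = (\<Sum>i<n. pderiv (x i) * f i \<alpha>)" for \<alpha>
    by (simp add: pderiv_smult pderiv_mult pderiv_prod pderiv_power f_def sum_distrib_left smult_sum_right
        of_nat_mult_conv_smult[symmetric] mult_ac)
  have step2: "(\<Sum>\<alpha>\<in>mons n (Suc e). f i \<alpha>) = evalf n e (\<lambda>\<alpha>. [:pdf i c \<alpha>:]) x" if i: "i < n" for i
  proof -
    have "(\<Sum>\<alpha>\<in>mons n (Suc e). f i \<alpha>) = (\<Sum>\<alpha>\<in>{\<alpha> \<in> mons n (Suc e). \<alpha> i \<noteq> 0}. f i \<alpha>)"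
      by (rule sum.mono_neutral_right) (auto simp: finite_mons f_def)
    also have "\<dots> = sum (f i) ((\<lambda>\<beta>. \<beta>(i := \<beta> i + 1)) ` mons n e)"
      by (simp only: mons_bij(2)[OF i])
    also have "\<dots> = (\<Sum>\<beta>\<in>mons n e. f i (\<beta>(i := \<beta> i + 1)))"
      by (simp only: sum.reindex[OF mons_bij(1)[OF i]] o_def)
    also have "\<dots> = evalf n e (\<lambda>\<alpha>. [:pdf i c \<alpha>:]) x"
      unfolding evalf_def
    proof (intro sum.cong refl)
      fix \<beta> assume "\<beta> \<in> mons n e"
      have pr: "(\<Prod>j\<in>{..<n}-{i}. x j ^ (\<beta>(i := \<beta> i + 1)) j) = (\<Prod>j\<in>{..<n}-{i}. x j ^ \<beta> j)"
        by (intro prod.cong) auto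
      have "(\<Prod>j<n. x j ^ \<beta> j) = x i ^ \<beta> i * (\<Prod>j\<in>{..<n}-{i}. x j ^ \<beta> j)"
        using i by (subst prod.remove[of _ i]) auto
      thus "f i (\<beta>(i := \<beta> i + 1)) = [:pdf i c \<beta>:] * (\<Prod>j<n. x j ^ \<beta> j)"
        unfolding f_def pr by (simp add: pdf_def of_nat_poly mult_ac)
    qed
    finally show ?thesis .
  qed
  have "pderiv (evalf n (Suc e) (\<lambda>\<alpha>. [:c \<alpha>:]) x) = (\<Sum>\<alpha>\<in>mons n (Suc e). \<Sum>i<n. pderiv (x i) * f i \<alpha>)"
    unfolding evalf_def pderiv_sum' step1 ..
  also have "\<dots> = (\<Sum>i<n. pderiv (x i) * (\<Sum>\<alpha>\<in>mons n (Suc e). f i \<alpha>))"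
    by (subst sum.swap) (simp add: sum_distrib_left)
  also have "\<dots> = (\<Sum>i<n. pderiv (x i) * evalf n e (\<lambda>\<alpha>. [:pdf i c \<alpha>:]) x)"
    by (intro sum.cong refl) (simp add: step2)
  finally show ?thesis .
qed



lemma poly_evalf: "poly (evalf n d (\<lambda>\<alpha>. [:c \<alpha>:]) x) s = evalf n d c (\<lambda>i. poly (x i) s)"
  by (simp add: evalf_def poly_sum poly_prod)

definition Lists :: "nat \<Rightarrow> nat \<Rightarrow> nat list set" where
  "Lists n j = {is. length is = j \<and> set is \<subseteq> {..<n}}"

lemma Lists_Suc: "Lists n (Suc j) = (\<lambda>(i, is). i # is) ` ({..<n} \<times> Lists n j)"
  by (auto simp: Lists_def length_Suc_conv image_iff)

lemma Lists_finite: "finite (Lists n j)"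
  unfolding Lists_def using finite_lists_length_eq[of "{..<n}" j] by (simp add: conj_commute)

lemma higher_chain:
  fixes c :: "(nat \<Rightarrow> nat) \<Rightarrow> 'a::field"
  assumes "j \<le> d"
  shows "(pderiv ^^ j) (evalf n d (\<lambda>\<alpha>. [:c \<alpha>:]) (\<lambda>i. [:P i, z i:])) =
    (\<Sum>is\<in>Lists n j. evalf n (d - j) (\<lambda>\<alpha>. [:pdfs is c \<alpha>:]) (\<lambda>i. [:P i, z i:]) * [:prod_list (map z is):])"
  using assms
proof (induction j)
  case 0
  have "Lists n 0 = {[]}" by (auto simp: Lists_def)
  thus ?case by (simp add: pdfs_def)
next
  case (Suc j)
  let ?X = "\<lambda>i. [:P i, z i:]"
  have dj: "d - j = Suc (d - Suc j)" using Suc.prems by simp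
  have "(pderiv ^^ Suc j) (evalf n d (\<lambda>\<alpha>. [:c \<alpha>:]) ?X) =
     (\<Sum>is\<in>Lists n j. pderiv (evalf n (d - j) (\<lambda>\<alpha>. [:pdfs is c \<alpha>:]) ?X) * [:prod_list (map z is):])"
    using Suc by (simp add: pderiv_sum' pderiv_mult pderiv_smult)
  also have "\<dots> = (\<Sum>is\<in>Lists n j. \<Sum>i<n. evalf n (d - Suc j) (\<lambda>\<alpha>. [:pdfs (i # is) c \<alpha>:]) ?X * [:prod_list (map z (i # is)):])"
    unfolding dj chain_rule
    by (intro sum.cong refl) (simp add: sum_distrib_right pdfs_def pderiv_pCons mult_ac smult_sum_right)
  also have "\<dots> = (\<Sum>(i, is)\<in>{..<n} \<times> Lists n j. evalf n (d - Suc j) (\<lambda>\<alpha>. [:pdfs (i # is) c \<alpha>:]) ?X * [:prod_list (map z (i # is)):])"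
    by (subst sum.swap) (simp add: sum.cartesian_product)
  also have "\<dots> = (\<Sum>is\<in>Lists n (Suc j). evalf n (d - Suc j) (\<lambda>\<alpha>. [:pdfs is c \<alpha>:]) ?X * [:prod_list (map z is):])"
    unfolding Lists_Suc by (subst sum.reindex) (auto simp: inj_on_def case_prod_unfold)
  finally show ?case .
qed

lemma tform_Phi:
  fixes c :: "(nat \<Rightarrow> nat) \<Rightarrow> 'a::field"
  assumes "j \<le> d"
  shows "tform n d j c P z = of_nat (fact j) * coeff (evalf n d (\<lambda>\<alpha>. [:c \<alpha>:]) (\<lambda>i. [:P i, z i:])) j"
proof -
  have pf: "pochhammer (1::'a) j = of_nat (fact j)"
    by (simp add: pochhammer_fact flip: pochhammer_of_nat)
  have "tform n d j c P z = poly ((pderiv ^^ j) (evalf n d (\<lambda>\<alpha>. [:c \<alpha>:]) (\<lambda>i. [:P i, z i:]))) 0"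
    unfolding higher_chain[OF assms] tform_def Lists_def[symmetric]
    by (simp add: poly_sum poly_evalf mult.commute)
  also have "\<dots> = of_nat (fact j) * coeff (evalf n d (\<lambda>\<alpha>. [:c \<alpha>:]) (\<lambda>i. [:P i, z i:])) j"
    using pf by (simp add: poly_0_coeff_0 coeff_higher_pderiv)
  finally show ?thesis .
qed

lemma degree_evalf:
  assumes "\<And>i. degree (x i) \<le> 1"
  shows "degree (evalf n d (\<lambda>\<alpha>. [:c \<alpha>:]) x) \<le> d"
  unfolding evalf_def
proof (rule degree_sum_le[OF finite_mons])
  fix \<alpha> assume a: "\<alpha> \<in> mons n d"
  have "degree (\<Prod>i<n. x i ^ \<alpha> i) \<le> (\<Sum>i<n. degree (x i ^ \<alpha> i))"
    using degree_prod_sum_le[of "{..<n}" "\<lambda>i. x i ^ \<alpha> i"] by (simp add: o_def)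
  also have "\<dots> \<le> (\<Sum>i<n. \<alpha> i)"
  proof (rule sum_mono)
    fix i
    have "degree (x i ^ \<alpha> i) \<le> degree (x i) * \<alpha> i" by (rule degree_power_le)
    also have "\<dots> \<le> 1 * \<alpha> i" using assms[of i] by (rule mult_le_mono1)
    finally show "degree (x i ^ \<alpha> i) \<le> \<alpha> i" by simp
  qed
  finally show "degree ([:c \<alpha>:] * (\<Prod>i<n. x i ^ \<alpha> i)) \<le> d"
    using a degree_smult_le[of "c \<alpha>" "\<Prod>i<n. x i ^ \<alpha> i"] by (auto simp: mons_def)
qed

lemma poly_eq_infinite:
  fixes p q :: "'a::field poly"
  assumes "infinite (UNIV :: 'a set)" "\<And>s. poly p s = poly q s"
  shows "p = q"
proof (rule ccontr)
  assume "p \<noteq> q"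
  hence "finite {x. poly (p - q) x = 0}" by (intro poly_roots_finite) simp
  moreover have "{x. poly (p - q) x = 0} = UNIV" using assms(2) by auto
  ultimately show False using assms(1) by simp
qed

lemma taylor:
  fixes c :: "(nat \<Rightarrow> nat) \<Rightarrow> 'a::field"
  assumes "infinite (UNIV :: 'a set)" "\<And>s. poly p s = evalf n d c (\<lambda>i. P i + s * z i)"
  shows "\<And>j. j \<le> d \<Longrightarrow> tform n d j c P z = of_nat (fact j) * coeff p j"
    and "degree p \<le> d"
proof -
  have eq: "p = evalf n d (\<lambda>\<alpha>. [:c \<alpha>:]) (\<lambda>i. [:P i, z i:])"
    by (rule poly_eq_infinite[OF assms(1)]) (simp add: assms(2) poly_evalf mult.commute)
  show "\<And>j. j \<le> d \<Longrightarrow> tform n d j c P z = of_nat (fact j) * coeff p j"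
    unfolding eq by (rule tform_Phi)
  show "degree p \<le> d" unfolding eq by (rule degree_evalf) simp
qed

lemma alg_closed_infinite: "infinite (UNIV :: 'a::alg_closed_field set)"
proof
  assume fin: "finite (UNIV :: 'a set)"
  define q :: "'a poly" where "q = (\<Prod>a\<in>UNIV. [:- a, 1:])"
  have dq: "degree q = card (UNIV :: 'a set)"
    unfolding q_def by (subst degree_prod_eq_sum_degree) auto
  have "card (UNIV :: 'a set) > 0" using fin by (simp add: card_gt_0_iff)
  hence "degree (q + 1) > 0" using dq by (simp add: degree_add_eq_left)
  then obtain x where "poly (q + 1) x = 0" using alg_closed_imp_poly_has_root by blast
  moreover have "poly q x = 0" unfolding q_def poly_prod
    by (rule prod_zero[OF fin]) (rule bexI[of _ x]; simp)
  ultimately show False by simp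
qed



inductive form_in :: "nat \<Rightarrow> nat \<Rightarrow> ((nat \<Rightarrow> 'a::comm_ring_1) \<Rightarrow> 'a) \<Rightarrow> bool" for n d where
  mon: "\<alpha> \<in> mons n d \<Longrightarrow> form_in n d (\<lambda>x. \<Prod>i<n. x i ^ \<alpha> i)"
| zero: "form_in n d (\<lambda>x. 0)"
| add: "form_in n d f \<Longrightarrow> form_in n d g \<Longrightarrow> form_in n d (\<lambda>x. f x + g x)"
| smul: "form_in n d f \<Longrightarrow> form_in n d (\<lambda>x. a * f x)"

lemma form_in_cong: "form_in n d f \<Longrightarrow> (\<And>x. f x = g x) \<Longrightarrow> form_in n d g"
proof -
  assume "form_in n d f" "\<And>x. f x = g x"
  moreover have "f = g" using \<open>\<And>x. f x = g x\<close> by auto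
  ultimately show ?thesis by simp
qed

lemma form_in_evalf: "form_in n d f \<Longrightarrow> \<exists>c. \<forall>x. f x = evalf n d c x"
proof (induction rule: form_in.induct)
  case (mon \<alpha>)
  have "(\<Prod>i<n. x i ^ \<alpha> i) = evalf n d (\<lambda>\<beta>. if \<beta> = \<alpha> then 1 else 0) x" for x
  proof -
    have "evalf n d (\<lambda>\<beta>. if \<beta> = \<alpha> then 1 else 0) x =
       (\<Sum>\<beta>\<in>mons n d. if \<beta> = \<alpha> then (\<Prod>i<n. x i ^ \<beta> i) else 0)"
      unfolding evalf_def by (rule sum.cong) auto
    also have "\<dots> = (\<Prod>i<n. x i ^ \<alpha> i)" by (simp add: finite_mons mon)
    finally show ?thesis by simp
  qed
  thus ?case by blast
next
  case zero
  show ?case by (rule exI[of _ "\<lambda>_. 0"]) (simp add: evalf_def)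
next
  case (add f g)
  then obtain c1 c2 where "\<forall>x. f x = evalf n d c1 x" "\<forall>x. g x = evalf n d c2 x" by blast
  thus ?case
    by (intro exI[of _ "\<lambda>\<beta>. c1 \<beta> + c2 \<beta>"]) (simp add: evalf_def distrib_right sum.distrib)
next
  case (smul f a)
  then obtain c1 where "\<forall>x. f x = evalf n d c1 x" by blast
  thus ?case
    by (intro exI[of _ "\<lambda>\<beta>. a * c1 \<beta>"]) (simp add: evalf_def sum_distrib_left mult_ac)
qed

lemma form_in_mon_mult:
  assumes "\<alpha> \<in> mons n d1" "form_in n d2 g"
  shows "form_in n (d1 + d2) (\<lambda>x. (\<Prod>i<n. x i ^ \<alpha> i) * g x)"
  using assms(2)
proof (induction rule: form_in.induct)
  case (mon \<beta>)
  have "(\<lambda>i. \<alpha> i + \<beta> i) \<in> mons n (d1 + d2)"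
    using assms(1) mon by (auto simp: mons_def sum.distrib)
  from form_in.mon[OF this] show ?case
    by (rule form_in_cong) (simp add: power_add prod.distrib)
next
  case zero show ?case by (rule form_in_cong[OF form_in.zero]) simp
next
  case (add f g) show ?case
    by (rule form_in_cong[OF form_in.add[OF add.IH]]) (simp add: distrib_left)
next
  case (smul f a) show ?case
    by (rule form_in_cong[OF form_in.smul[OF smul.IH, of a]]) (simp add: mult_ac)
qed

lemma form_in_mult:
  assumes "form_in n d1 f" "form_in n d2 g"
  shows "form_in n (d1 + d2) (\<lambda>x. f x * g x)"
  using assms(1)
proof (induction rule: form_in.induct)
  case (mon \<alpha>) show ?case using form_in_mon_mult[OF mon assms(2)] .
next
  case zero show ?case by (rule form_in_cong[OF form_in.zero]) simp
next
  case (add f1 f2) show ?case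
    by (rule form_in_cong[OF form_in.add[OF add.IH]]) (simp add: distrib_right)
next
  case (smul f a) show ?case
    by (rule form_in_cong[OF form_in.smul[OF smul.IH, of a]]) (simp add: mult_ac)
qed

lemma form_in_one: "form_in n 0 (\<lambda>x. 1)"
proof -
  have "(\<lambda>_. 0) \<in> mons n 0" by (simp add: mons_def)
  from form_in.mon[OF this] show ?thesis by (rule form_in_cong) simp
qed

lemma form_in_pow: "form_in n 1 f \<Longrightarrow> form_in n k (\<lambda>x. f x ^ k)"
proof (induction k)
  case 0 show ?case using form_in_one by (rule form_in_cong) simp
next
  case (Suc k)
  from form_in_mult[OF Suc.prems Suc.IH[OF Suc.prems]] show ?case by simp
qed

lemma form_in_sum: "finite S \<Longrightarrow> (\<And>s. s \<in> S \<Longrightarrow> form_in n d (f s)) \<Longrightarrow> form_in n d (\<lambda>x. \<Sum>s\<in>S. f s x)"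
proof (induction S rule: finite_induct)
  case empty show ?case by (rule form_in_cong[OF form_in.zero]) simp
next
  case (insert s S)
  have "form_in n d (\<lambda>x. f s x + (\<Sum>s\<in>S. f s x))"
    using insert by (intro form_in.add) auto
  thus ?case by (rule form_in_cong) (simp add: insert)
qed

lemma form_in_prod: "finite S \<Longrightarrow> (\<And>s. s \<in> S \<Longrightarrow> form_in n (e s) (f s)) \<Longrightarrow>
   form_in n (\<Sum>s\<in>S. e s) (\<lambda>x. \<Prod>s\<in>S. f s x)"
proof (induction S rule: finite_induct)
  case empty show ?case using form_in_one[of n] by simp
next
  case (insert s S)
  have "form_in n (e s + (\<Sum>s\<in>S. e s)) (\<lambda>x. f s x * (\<Prod>s\<in>S. f s x))"
    using insert by (intro form_in_mult) auto
  hence "form_in n (\<Sum>s\<in>insert s S. e s) (\<lambda>x. f s x * (\<Prod>s\<in>S. f s x))" using insert by simp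
  thus ?case by (rule form_in_cong) (simp add: insert)
qed

lemma form_in_compose:
  assumes "\<And>i. i < n \<Longrightarrow> form_in m 1 (L i)"
  shows "form_in m d (\<lambda>x. evalf n d c (\<lambda>i. L i x))"
  unfolding evalf_def
proof (rule form_in_sum[OF finite_mons])
  fix \<alpha> assume a: "\<alpha> \<in> mons n d"
  have "form_in m (\<Sum>i<n. \<alpha> i) (\<lambda>x. \<Prod>i<n. L i x ^ \<alpha> i)"
    using assms by (intro form_in_prod form_in_pow) auto
  hence "form_in m d (\<lambda>x. \<Prod>i<n. L i x ^ \<alpha> i)" using a by (simp add: mons_def)
  thus "form_in m d (\<lambda>x. c \<alpha> * (\<Prod>i<n. L i x ^ \<alpha> i))" by (rule form_in.smul)
qed

lemma form_in_var: "j < n \<Longrightarrow> form_in n 1 (\<lambda>x. x j)"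
proof -
  assume j: "j < n"
  have "(\<lambda>k. if k = j then 1 else 0) \<in> mons n 1" using j by (auto simp: mons_def)
  from form_in.mon[OF this] show ?thesis
    by (rule form_in_cong) (simp add: j if_distrib cong: if_cong)
qed

lemma form_in_lin3: "form_in 3 1 (\<lambda>x. x 0 * a + x 1 * b + x 2 * e)"
proof -
  have "form_in 3 1 (\<lambda>x. a * x 0 + b * x 1 + e * x 2)"
    by (intro form_in.add form_in.smul form_in_var) auto
  thus ?thesis by (rule form_in_cong) (simp add: mult_ac)
qed

lemma split_var:
  fixes c :: "(nat \<Rightarrow> nat) \<Rightarrow> 'a::comm_ring_1"
  assumes k: "k < n"
  shows "evalf n (Suc e) c x = evalf n (Suc e) c (x(k := 0)) + x k * evalf n e (\<lambda>\<beta>. c (\<beta>(k := \<beta> k + 1))) x"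
proof -
  define M where "M = mons n (Suc e)"
  define T where "T y = (\<Sum>\<alpha>\<in>M. if \<alpha> k = 0 then c \<alpha> * (\<Prod>i<n. y i ^ \<alpha> i) else 0)" for y :: "nat \<Rightarrow> 'a"
  have main: "evalf n (Suc e) c y = T y + y k * evalf n e (\<lambda>\<beta>. c (\<beta>(k := \<beta> k + 1))) y" for y
  proof -
    have "evalf n (Suc e) c y = T y + (\<Sum>\<alpha>\<in>M. if \<alpha> k \<noteq> 0 then c \<alpha> * (\<Prod>i<n. y i ^ \<alpha> i) else 0)"
      unfolding evalf_def T_def M_def[symmetric] by (simp add: sum.distrib[symmetric] if_distrib cong: if_cong)
    also have "(\<Sum>\<alpha>\<in>M. if \<alpha> k \<noteq> 0 then c \<alpha> * (\<Prod>i<n. y i ^ \<alpha> i) else 0)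
        = (\<Sum>\<alpha>\<in>{\<alpha>\<in>M. \<alpha> k \<noteq> 0}. c \<alpha> * (\<Prod>i<n. y i ^ \<alpha> i))"
      by (simp add: sum.inter_filter M_def finite_mons)
    also have "\<dots> = sum (\<lambda>\<alpha>. c \<alpha> * (\<Prod>i<n. y i ^ \<alpha> i)) ((\<lambda>\<beta>. \<beta>(k := \<beta> k + 1)) ` mons n e)"
      unfolding M_def by (simp only: mons_bij(2)[OF k])
    also have "\<dots> = (\<Sum>\<beta>\<in>mons n e. c (\<beta>(k := \<beta> k + 1)) * (\<Prod>i<n. y i ^ (\<beta>(k := \<beta> k + 1)) i))"
      by (simp only: sum.reindex[OF mons_bij(1)[OF k]] o_def)
    also have "\<dots> = y k * evalf n e (\<lambda>\<beta>. c (\<beta>(k := \<beta> k + 1))) y"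
      unfolding evalf_def sum_distrib_left
    proof (intro sum.cong refl)
      fix \<beta> :: "nat \<Rightarrow> nat"
      have "(\<Prod>i<n. y i ^ (\<beta>(k := \<beta> k + 1)) i) = y k ^ (\<beta> k + 1) * (\<Prod>i\<in>{..<n}-{k}. y i ^ \<beta> i)"
        using k by (subst prod.remove[of _ k]) (auto intro!: prod.cong)
      moreover have "(\<Prod>i<n. y i ^ \<beta> i) = y k ^ \<beta> k * (\<Prod>i\<in>{..<n}-{k}. y i ^ \<beta> i)"
        using k by (subst prod.remove[of _ k]) auto
      ultimately show "c (\<beta>(k := \<beta> k + 1)) * (\<Prod>i<n. y i ^ (\<beta>(k := \<beta> k + 1)) i) =
          y k * (c (\<beta>(k := \<beta> k + 1)) * (\<Prod>i<n. y i ^ \<beta> i))"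
        by (simp add: mult_ac)
    qed
    finally show ?thesis .
  qed
  have "T (x(k := 0)) = T x"
    unfolding T_def
  proof (intro sum.cong refl)
    fix \<alpha> :: "nat \<Rightarrow> nat"
    have "\<alpha> k = 0 \<Longrightarrow> (\<Prod>i<n. (x(k := 0)) i ^ \<alpha> i) = (\<Prod>i<n. x i ^ \<alpha> i)"
      by (intro prod.cong) auto
    thus "(if \<alpha> k = 0 then c \<alpha> * (\<Prod>i<n. (x(k := 0)) i ^ \<alpha> i) else 0) =
          (if \<alpha> k = 0 then c \<alpha> * (\<Prod>i<n. x i ^ \<alpha> i) else 0)" by auto
  qed
  with main[of x] main[of "x(k := 0)"] show ?thesis by simp
qed

lemma Lists_one: "Lists n 1 = (\<lambda>i. [i]) ` {..<n}"
  by (auto simp: Lists_def length_Suc_conv)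

lemma tform_one: "tform n d 1 c P z = (\<Sum>i<n. evalf n (d - 1) (pdf i c) P * z i)"
  unfolding tform_def Lists_def[symmetric] Lists_one
  by (subst sum.reindex) (auto simp: inj_on_def pdfs_def)

lemma dep:
  fixes u :: "'b \<Rightarrow> 'c \<Rightarrow> 'a::field"
  assumes "finite I" "finite J" "card I < card J"
  shows "\<exists>a. (\<exists>j\<in>J. a j \<noteq> 0) \<and> (\<forall>i\<in>I. (\<Sum>j\<in>J. a j * u j i) = 0)"
  using assms
proof (induction I arbitrary: J u rule: finite_induct)
  case empty
  then obtain j where "j \<in> J" by (metis card.empty card_gt_0_iff ex_in_conv)
  thus ?case by (intro exI[of _ "\<lambda>_. 1"]) auto
next
  case (insert i0 I)
  show ?case
  proof (cases "\<forall>j\<in>J. u j i0 = 0")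
    case True
    from insert.IH[of J u] insert.prems insert.hyps obtain a where
      "(\<exists>j\<in>J. a j \<noteq> 0)" "\<forall>i\<in>I. (\<Sum>j\<in>J. a j * u j i) = 0" by auto
    thus ?thesis using True by (intro exI[of _ a]) auto
  next
    case False
    then obtain j0 where j0: "j0 \<in> J" "u j0 i0 \<noteq> 0" by auto
    define cf where "cf j = u j i0 / u j0 i0" for j
    define u' where "u' j i = u j i - cf j * u j0 i" for j i
    have "card I < card (J - {j0})" using insert.prems insert.hyps j0 by auto
    from insert.IH[of "J - {j0}" u'] this insert.prems obtain a' where
      a': "\<exists>j\<in>J - {j0}. a' j \<noteq> 0" "\<forall>i\<in>I. (\<Sum>j\<in>J - {j0}. a' j * u' j i) = 0" by auto
    have a'0: "\<forall>i\<in>insert i0 I. (\<Sum>j\<in>J - {j0}. a' j * u' j i) = 0"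
      using a'(2) j0 by (auto simp: u'_def cf_def)
    define a where "a j = (if j = j0 then - (\<Sum>j\<in>J - {j0}. a' j * cf j) else a' j)" for j
    have "(\<Sum>j\<in>J. a j * u j i) = 0" if "i \<in> insert i0 I" for i
    proof -
      have "(\<Sum>j\<in>J. a j * u j i) = a j0 * u j0 i + (\<Sum>j\<in>J - {j0}. a' j * u j i)"
        using j0 insert.prems by (subst sum.remove[of _ j0]) (auto simp: a_def)
      also have "(\<Sum>j\<in>J - {j0}. a' j * u j i) = (\<Sum>j\<in>J - {j0}. a' j * u' j i) + (\<Sum>j\<in>J - {j0}. a' j * cf j) * u j0 i"
        by (simp add: u'_def algebra_simps sum.distrib sum_distrib_right sum_distrib_left sum_subtractf)
      finally show ?thesis using a'0 that by (auto simp: a_def)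
    qed
    moreover have "\<exists>j\<in>J. a j \<noteq> 0" using a'(1) by (auto simp: a_def)
    ultimately show ?thesis by blast
  qed
qed



lemma tform_cong_z: "(\<And>i. i < n \<Longrightarrow> z i = z' i) \<Longrightarrow> tform n d j c P z = tform n d j c P z'"
  unfolding tform_def
proof (intro sum.cong refl arg_cong2[where f="(*)"])
  fix "is" assume "\<And>i. i < n \<Longrightarrow> z i = z' i" "is \<in> {is. length is = j \<and> set is \<subseteq> {..<n}}"
  thus "prod_list (map z is) = prod_list (map z' is)"
    by (intro arg_cong[where f=prod_list] map_cong) auto
qed

lemma Phi_exists: "\<exists>p. \<forall>s. poly p s = evalf n d (c :: _ \<Rightarrow> 'a::field) (\<lambda>i. P i + s * z i)"
  by (rule exI[of _ "evalf n d (\<lambda>\<alpha>. [:c \<alpha>:]) (\<lambda>i. [:P i, z i:])"]) (simp add: poly_evalf mult.commute)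

lemma poly_upto: fixes p :: "'a::field poly" assumes "degree p \<le> d" shows "poly p x = (\<Sum>i\<le>d. coeff p i * x ^ i)"
  unfolding poly_altdef
  by (rule sum.mono_neutral_left) (use assms in \<open>auto simp: coeff_eq_0\<close>)

lemma poly_eq_cofinite:
  fixes p q :: "'a::field poly"
  assumes "infinite (UNIV :: 'a set)" "\<And>s. 1 + s * \<alpha> \<noteq> 0 \<Longrightarrow> poly p s = poly q s"
  shows "p = q"
proof (rule ccontr)
  assume "p \<noteq> q"
  hence "finite {x. poly (p - q) x = 0}" by (intro poly_roots_finite) simp
  moreover have "finite {s. 1 + s * \<alpha> = 0}"
  proof -
    have "{s. 1 + s * \<alpha> = 0} \<subseteq> {- 1 / \<alpha>}"
    proof
      fix s assume "s \<in> {s. 1 + s * \<alpha> = 0}"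
      hence h: "s * \<alpha> = - 1" by (simp add: add_eq_0_iff)
      hence "\<alpha> \<noteq> 0" by auto
      hence "s = s * \<alpha> / \<alpha>" by simp
      with h have "s = - 1 / \<alpha>" by simp
      thus "s \<in> {- 1 / \<alpha>}" by simp
    qed
    thus ?thesis using finite_subset by blast
  qed
  ultimately have "finite ({x. poly (p - q) x = 0} \<union> {s. 1 + s * \<alpha> = 0})" by simp
  moreover have "{x. poly (p - q) x = 0} \<union> {s. 1 + s * \<alpha> = 0} = UNIV" using assms(2) by auto
  ultimately show False using assms(1) by (metis finite_Un)
qed

lemma binary:
  fixes c :: "(nat \<Rightarrow> nat) \<Rightarrow> 'a::field"
  assumes inf: "infinite (UNIV :: 'a set)" and d: "3 \<le> d"
    and pw: "\<And>s. poly pw s = evalf n d c (\<lambda>i. P i + s * w i)"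
    and deg: "degree pw \<le> d" and co: "\<And>j. j \<le> 3 \<Longrightarrow> coeff pw j = 0"
  shows "tform n d 3 c P (\<lambda>i. \<alpha> * P i + \<beta> * w i) = 0"
proof -
  define R where "R = (\<Sum>k\<in>{4..d}. smult (coeff pw k * \<beta> ^ k) ([:1, \<alpha>:] ^ (d - k) * [:0, 1:] ^ (k - 4)))"
  define p where "p = pCons 0 (pCons 0 (pCons 0 (pCons 0 R)))"
  obtain pz where pz: "\<And>s. poly pz s = evalf n d c (\<lambda>i. P i + s * (\<alpha> * P i + \<beta> * w i))"
    using Phi_exists[of n d c P "\<lambda>i. \<alpha> * P i + \<beta> * w i"] by blast
  have "p = pz"
  proof (rule poly_eq_cofinite[OF inf, of \<alpha>])
    fix s :: 'a assume a: "1 + s * \<alpha> \<noteq> 0"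
    define a where "a = 1 + s * \<alpha>"
    have "(\<lambda>i. P i + s * (\<alpha> * P i + \<beta> * w i)) = (\<lambda>i. a * (P i + (s * \<beta> / a) * w i))"
    proof
      fix i
      have "a * (P i + (s * \<beta> / a) * w i) = a * P i + s * \<beta> * w i"
        using a by (simp add: a_def distrib_left)
      thus "P i + s * (\<alpha> * P i + \<beta> * w i) = a * (P i + (s * \<beta> / a) * w i)"
        by (simp add: a_def algebra_simps)
    qed
    hence "evalf n d c (\<lambda>i. P i + s * (\<alpha> * P i + \<beta> * w i)) = evalf n d c (\<lambda>i. a * (P i + (s * \<beta> / a) * w i))"
      by simp
    also have "\<dots> = a ^ d * poly pw (s * \<beta> / a)" by (simp add: evalf_homog pw)
    also have "\<dots> = a ^ d * (\<Sum>k\<le>d. coeff pw k * (s * \<beta> / a) ^ k)" by (simp add: poly_upto[OF deg])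
    also have "\<dots> = (\<Sum>k\<le>d. coeff pw k * a ^ (d - k) * (s * \<beta>) ^ k)"
      unfolding sum_distrib_left
    proof (intro sum.cong refl)
      fix k assume "k \<in> {..d}"
      hence "a ^ d = a ^ (d - k) * a ^ k" by (simp add: power_add[symmetric])
      moreover have "a \<noteq> 0" using a by (simp add: a_def)
      ultimately show "a ^ d * (coeff pw k * (s * \<beta> / a) ^ k) = coeff pw k * a ^ (d - k) * (s * \<beta>) ^ k"
        by (simp add: power_divide)
    qed
    also have "\<dots> = (\<Sum>k\<in>{4..d}. coeff pw k * a ^ (d - k) * (s * \<beta>) ^ k)"
      by (rule sum.mono_neutral_right) (auto simp: co)
    also have "\<dots> = s ^ 4 * poly R s"
      unfolding R_def poly_sum sum_distrib_left
    proof (intro sum.cong refl)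
      fix k assume "k \<in> {4..d}"
      hence "s ^ k = s ^ 4 * s ^ (k - 4)" by (simp add: power_add[symmetric])
      thus "coeff pw k * a ^ (d - k) * (s * \<beta>) ^ k =
          s ^ 4 * poly (smult (coeff pw k * \<beta> ^ k) ([:1, \<alpha>:] ^ (d - k) * [:0, 1:] ^ (k - 4))) s"
        by (simp add: a_def power_mult_distrib mult_ac)
    qed
    also have "\<dots> = poly p s" by (simp add: p_def eval_nat_numeral mult_ac)
    finally show "poly p s = poly pz s" by (simp add: pz)
  qed
  have "tform n d 3 c P (\<lambda>i. \<alpha> * P i + \<beta> * w i) = of_nat (fact 3) * coeff pz 3"
    using taylor(1)[OF inf pz d] .
  also have "coeff pz 3 = 0" unfolding \<open>p = pz\<close>[symmetric] by (simp add: p_def eval_nat_numeral)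
  finally show ?thesis by simp
qed



theorem lemma2p7:
  fixes d :: nat and c :: "(nat \<Rightarrow> nat) \<Rightarrow> 'a::alg_closed_field"
    and A B P :: "nat \<Rightarrow> 'a" and s0 t0 :: 'a
  assumes "d \<ge> 3"
    and "CHAR('a) = 0 \<or> CHAR('a) > d"
    and "smooth_surface d c"
    and "line_on d c A B"
    and "(s0, t0) \<noteq> (0, 0)" and "P = (\<lambda>i. s0 * A i + t0 * B i)"
    and "\<exists>z. tform 4 d 1 c P z = 0 \<and> tform 4 d 2 c P z \<noteq> 0"
    and "second_kind d c A B"
  shows "\<forall>z. tform 4 d 1 c P z = 0 \<and> tform 4 d 2 c P z = 0 \<longrightarrow> tform 4 d 3 c P z = 0"
proof (intro allI impI)
  fix z assume zH: "tform 4 d 1 c P z = 0 \<and> tform 4 d 2 c P z = 0"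
  have d3: "3 \<le> d" using assms(1) .
  have inf: "infinite (UNIV :: 'a set)" by (rule alg_closed_infinite)
  have cn: "(of_nat m :: 'a) \<noteq> 0" if "m \<in> {2, 3}" for m
  proof
    assume "(of_nat m :: 'a) = 0"
    hence "CHAR('a) dvd m" by (simp only: of_nat_eq_0_iff_char_dvd)
    thus False using assms(1,2) that by (auto dest: dvd_imp_le)
  qed
  have c2: "(of_nat 2 :: 'a) \<noteq> 0" and c3: "(of_nat 3 :: 'a) \<noteq> 0" using cn[of 2] cn[of 3] by auto
  have f2: "(of_nat (fact 2) :: 'a) \<noteq> 0" using c2 by (simp add: numeral_2_eq_2)
  have f3: "(of_nat (fact 3) :: 'a) \<noteq> 0"
  proof -
    have "(fact 3 :: nat) = 2 * 3" by (simp add: eval_nat_numeral)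
    hence "(of_nat (fact 3) :: 'a) = of_nat 2 * of_nat 3" by (metis of_nat_mult)
    thus ?thesis using c2 c3 mult_eq_0_iff by metis
  qed
  have indepAB: "indep2 4 A B" and lineF: "\<And>s t. evalf 4 d c (\<lambda>i. s * A i + t * B i) = 0"
    using assms(4) by (auto simp: line_on_def)
  have L1: "tform 4 d j c P y = 0" if "\<And>i. i < 4 \<Longrightarrow> y i = a * A i + b * B i" "j \<le> d" for y a b j
  proof -
    have "poly 0 s = evalf 4 d c (\<lambda>i. P i + s * y i)" for s
    proof -
      have "evalf 4 d c (\<lambda>i. P i + s * y i) = evalf 4 d c (\<lambda>i. (s0 + s * a) * A i + (t0 + s * b) * B i)"
      proof (rule evalf_cong)
        fix i :: nat assume "i < 4"
        hence yi: "y i = a * A i + b * B i" by (rule that(1))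
        show "P i + s * y i = (s0 + s * a) * A i + (t0 + s * b) * B i"
          unfolding yi assms(6) by (simp add: distrib_left distrib_right mult.assoc)
      qed
      thus ?thesis by (simp add: lineF)
    qed
    from taylor(1)[OF inf this \<open>j \<le> d\<close>] show ?thesis by simp
  qed
  have nzP: "nonzero_vec 4 P"
  proof (rule ccontr)
    assume "\<not> nonzero_vec 4 P"
    hence "\<forall>i<4. P i = 0" unfolding nonzero_vec_def by blast
    hence "\<forall>i<4. s0 * A i + t0 * B i = 0" unfolding assms(6) .
    hence "s0 = 0 \<and> t0 = 0" using indepAB unfolding indep2_def by blast
    with assms(5) show False by simp
  qed
  have FP: "evalf 4 d c P = 0" using lineF[of s0 t0] assms(6) by simp
  obtain k where k: "k < 4" "evalf 4 (d - 1) (pdf k c) P \<noteq> 0"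
    using assms(3) nzP FP by (auto simp: smooth_surface_def)
  define g where "g i = evalf 4 (d - 1) (pdf i c) P" for i
  have T1: "tform 4 d 1 c P y = (\<Sum>i<4. g i * y i)" for y unfolding g_def by (rule tform_one)
  obtain z' where z': "tform 4 d 1 c P z' = 0" "tform 4 d 2 c P z' \<noteq> 0" using assms(7) by blast
  have indABz': "indep3 4 A B z'"
    unfolding indep3_def
  proof (intro allI impI)
    fix a b e assume H: "\<forall>i<4. a * A i + b * B i + e * z' i = 0"
    have e0: "e = 0"
    proof (rule ccontr)
      assume e: "e \<noteq> 0"
      have zi: "z' i = (- a / e) * A i + (- b / e) * B i" if "i < 4" for i
      proof -
        have "(a * A i + b * B i) + e * z' i = 0" using H that by simp
        hence ez: "e * z' i = - (a * A i + b * B i)" by (simp only: add_eq_0_iff)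
        have "z' i = inverse e * (e * z' i)" using e by simp
        also have "\<dots> = (- a / e) * A i + (- b / e) * B i" unfolding ez
          by (simp add: divide_inverse algebra_simps)
        finally show ?thesis .
      qed
      have "tform 4 d 2 c P z' = 0" by (rule L1[of z' "- a / e" "- b / e" 2]) (use zi d3 in auto)
      with z' show False by simp
    qed
    with H have "\<forall>i<4. a * A i + b * B i = 0" by simp
    hence "a = 0 \<and> b = 0" using indepAB unfolding indep2_def by blast
    with e0 show "a = 0 \<and> b = 0 \<and> e = 0" by simp
  qed
  have "form_in 3 d (\<lambda>x. evalf 4 d c (\<lambda>i. x 0 * A i + x 1 * B i + x 2 * z' i))"
    by (rule form_in_compose) (rule form_in_lin3)
  then obtain gc where gc: "\<And>x. evalf 4 d c (\<lambda>i. x 0 * A i + x 1 * B i + x 2 * z' i) = evalf 3 d gc x"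
    using form_in_evalf by blast
  define h where "h = (\<lambda>\<beta>. gc (\<beta>(2 := \<beta> 2 + 1)))"
  have Gh: "evalf 4 d c (\<lambda>i. x 0 * A i + x 1 * B i + x 2 * z' i) = x 2 * evalf 3 (d - 1) h x" for x
  proof -
    have dd: "d = Suc (d - 1)" using d3 by simp
    have "evalf 3 d gc (x(2 := 0)) = evalf 4 d c (\<lambda>i. x 0 * A i + x 1 * B i + 0 * z' i)"
      using gc[of "x(2 := 0)"] by simp
    also have "\<dots> = 0" using lineF by simp
    finally have "evalf 3 d gc (x(2 := 0)) = 0" .
    moreover have "evalf 3 d gc x = evalf 3 d gc (x(2 := 0)) + x 2 * evalf 3 (d - 1) h x"
      using split_var[of 2 3 "d - 1" gc x] dd unfolding h_def by simp
    ultimately show ?thesis using gc[of x] by simp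
  qed
  have SK: "inflection_pt (d - 1) h Q" if "nonzero_vec 3 Q" "Q 2 = 0" "evalf 3 (d - 1) h Q = 0" for Q
  proof -
    have "\<forall>x. evalf 4 d c (\<lambda>i. x 0 * A i + x 1 * B i + x 2 * z' i) = x 2 * evalf 3 (d - 1) h x"
      using Gh by blast
    with assms(8) indABz' that show ?thesis unfolding second_kind_def by blast
  qed
  define Q where "Q = (\<lambda>i::nat. if i = 0 then s0 else if i = 1 then t0 else (0::'a))"
  define Y where "Y y = (\<lambda>i. y 0 * A i + y 1 * B i + y 2 * z' i)" for y :: "nat \<Rightarrow> 'a"
  have key: "\<exists>\<psi>. (\<forall>j\<le>d - 1. tform 3 (d - 1) j h Q y = of_nat (fact j) * coeff \<psi> j) \<and>
      (\<forall>j\<le>d. tform 4 d j c P (Y y) = of_nat (fact j) * coeff (smult (y 2) (pCons 0 \<psi>)) j) \<and>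
      (\<forall>s. poly (smult (y 2) (pCons 0 \<psi>)) s = evalf 4 d c (\<lambda>i. P i + s * Y y i)) \<and>
      degree (smult (y 2) (pCons 0 \<psi>)) \<le> d \<and>
      coeff \<psi> 0 = evalf 3 (d - 1) h Q" for y
  proof -
    obtain \<psi> where \<psi>: "\<And>s. poly \<psi> s = evalf 3 (d - 1) h (\<lambda>i. Q i + s * y i)"
      using Phi_exists[of 3 "d - 1" h Q y] by blast
    have pe: "poly (smult (y 2) (pCons 0 \<psi>)) s = evalf 4 d c (\<lambda>i. P i + s * Y y i)" for s
    proof -
      have "(\<lambda>i. P i + s * Y y i) =
          (\<lambda>i. (\<lambda>i. Q i + s * y i) 0 * A i + (\<lambda>i. Q i + s * y i) 1 * B i + (\<lambda>i. Q i + s * y i) 2 * z' i)"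
        by (auto simp: fun_eq_iff assms(6) Y_def Q_def algebra_simps)
      hence "evalf 4 d c (\<lambda>i. P i + s * Y y i) = (Q 2 + s * y 2) * evalf 3 (d - 1) h (\<lambda>i. Q i + s * y i)"
        using Gh[of "\<lambda>i. Q i + s * y i"] by simp
      thus ?thesis by (simp add: \<psi> Q_def mult_ac)
    qed
    show ?thesis
    proof (intro exI conjI allI impI)
      fix j assume "j \<le> d - 1"
      thus "tform 3 (d - 1) j h Q y = of_nat (fact j) * coeff \<psi> j" using taylor(1)[OF inf \<psi>] by blast
    next
      fix j assume "j \<le> d"
      thus "tform 4 d j c P (Y y) = of_nat (fact j) * coeff (smult (y 2) (pCons 0 \<psi>)) j"
        using taylor(1)[OF inf pe] by blast
    next
      fix s show "poly (smult (y 2) (pCons 0 \<psi>)) s = evalf 4 d c (\<lambda>i. P i + s * Y y i)" by (rule pe)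
    next
      show "degree (smult (y 2) (pCons 0 \<psi>)) \<le> d" using taylor(2)[OF inf pe] .
    next
      show "coeff \<psi> 0 = evalf 3 (d - 1) h Q" by (simp add: poly_0_coeff_0[symmetric] \<psi>)
    qed
  qed
  define e2 where "e2 = (\<lambda>i::nat. if i = 2 then (1::'a) else 0)"
  have Ye2: "Y e2 = z'" by (simp add: Y_def e2_def fun_eq_iff)
  obtain \<psi>1 where \<psi>1: "\<forall>j\<le>d - 1. tform 3 (d - 1) j h Q e2 = of_nat (fact j) * coeff \<psi>1 j"
      "\<forall>j\<le>d. tform 4 d j c P z' = of_nat (fact j) * coeff (smult 1 (pCons 0 \<psi>1)) j"
      "coeff \<psi>1 0 = evalf 3 (d - 1) h Q"
    using key[of e2] unfolding Ye2 by (auto simp: e2_def)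
  have HQ: "evalf 3 (d - 1) h Q = 0"
    using \<psi>1(2)[rule_format, of 1] \<psi>1(3) z'(1) d3 by simp
  have "coeff \<psi>1 1 \<noteq> 0"
    using \<psi>1(2)[rule_format, of 2] z'(2) d3 by (simp add: numeral_2_eq_2)
  hence le2: "tform 3 (d - 1) 1 h Q e2 \<noteq> 0"
    using \<psi>1(1)[rule_format, of 1] d3 by simp
  have nzQ: "nonzero_vec 3 Q"
    using assms(5) by (cases "s0 = 0") (auto simp: nonzero_vec_def Q_def intro: exI[of _ 0] exI[of _ 1])
  have Q2: "Q 2 = 0" by (simp add: Q_def)
  from SK[OF nzQ Q2 HQ] obtain v where v: "indep2 3 Q v" "tform 3 (d - 1) 1 h Q v = 0"
      "tform 3 (d - 1) 2 h Q v = 0"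
    unfolding inflection_pt_def by blast
  obtain \<psi>v where \<psi>v: "\<forall>j\<le>d - 1. tform 3 (d - 1) j h Q v = of_nat (fact j) * coeff \<psi>v j"
      "\<forall>s. poly (smult (v 2) (pCons 0 \<psi>v)) s = evalf 4 d c (\<lambda>i. P i + s * Y v i)"
      "degree (smult (v 2) (pCons 0 \<psi>v)) \<le> d"
      "coeff \<psi>v 0 = evalf 3 (d - 1) h Q"
    using key[of v] by blast
  have cv1: "coeff \<psi>v 1 = 0" using \<psi>v(1)[rule_format, of 1] v(2) d3 by simp
  have cv2: "coeff \<psi>v 2 = 0" using \<psi>v(1)[rule_format, of 2] v(3) d3 f2 by simp
  have cv0: "coeff \<psi>v 0 = 0" using \<psi>v(4) HQ by simp
  define pw where "pw = smult (v 2) (pCons 0 \<psi>v)"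
  have cpw: "coeff pw j = 0" if "j \<le> 3" for j
  proof -
    have "j = 0 \<or> j = 1 \<or> j = 2 \<or> j = 3" using that by auto
    thus ?thesis using cv0 cv1 cv2 by (auto simp: pw_def numeral_2_eq_2 numeral_3_eq_3)
  qed
  have T1A: "tform 4 d 1 c P A = 0" by (rule L1[of _ 1 0]) (use d3 in auto)
  have T1B: "tform 4 d 1 c P B = 0" by (rule L1[of _ 0 1]) (use d3 in auto)
  define u where "u j = (if j = 0 then A else if j = 1 then B else if j = 2 then z' else z)" for j :: nat
  have ker: "(\<Sum>i<4. g i * u j i) = 0" if "j < 4" for j
    using T1A T1B z'(1) zH unfolding T1[symmetric] u_def by auto
  have c43: "card ({..<4::nat} - {k}) < card {..<4::nat}" using k(1) by simp
  obtain a where a: "\<exists>j\<in>{..<4::nat}. a j \<noteq> 0" "\<forall>i\<in>{..<4} - {k}. (\<Sum>j<4. a j * u j i) = 0"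
    using dep[OF _ _ c43, of u] by auto
  have Rk: "(\<Sum>j<4. a j * u j k) = 0"
  proof -
    have "(\<Sum>i<4. g i * (\<Sum>j<4. a j * u j i)) = (\<Sum>j<4. a j * (\<Sum>i<4. g i * u j i))"
    proof -
      have "(\<Sum>i<4. g i * (\<Sum>j<4. a j * u j i)) = (\<Sum>i<4. \<Sum>j<4. g i * (a j * u j i))"
        by (simp add: sum_distrib_left)
      also have "\<dots> = (\<Sum>j<4. \<Sum>i<4. g i * (a j * u j i))" by (rule sum.swap)
      also have "\<dots> = (\<Sum>j<4. a j * (\<Sum>i<4. g i * u j i))" by (simp add: sum_distrib_left mult_ac)
      finally show ?thesis .
    qed
    also have "\<dots> = 0" using ker by simp
    finally have "(\<Sum>i<4. g i * (\<Sum>j<4. a j * u j i)) = 0" .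
    moreover have "(\<Sum>i<4. g i * (\<Sum>j<4. a j * u j i)) = g k * (\<Sum>j<4. a j * u j k)"
      using k(1) a(2) by (subst sum.remove[of _ k]) auto
    ultimately show ?thesis using k(2) g_def by simp
  qed
  have R4: "a 0 * A i + a 1 * B i + a 2 * z' i + a 3 * z i = 0" if "i < 4" for i
  proof -
    have "(\<Sum>j<4. a j * u j i) = 0" using Rk a(2) that by (cases "i = k") auto
    moreover have "{..<4::nat} = {0, 1, 2, 3}" by auto
    ultimately show ?thesis by (simp add: u_def add.assoc)
  qed
  have a3: "a 3 \<noteq> 0"
  proof
    assume "a 3 = 0"
    with R4 have "\<forall>i<4. a 0 * A i + a 1 * B i + a 2 * z' i = 0" by simp
    hence "a 0 = 0 \<and> a 1 = 0 \<and> a 2 = 0" using indABz' unfolding indep3_def by blast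
    moreover have "{..<4::nat} = {0, 1, 2, 3}" by auto
    ultimately show False using a(1) \<open>a 3 = 0\<close> by auto
  qed
  define y where "y = (\<lambda>i::nat. if i = 0 then - a 0 / a 3 else if i = 1 then - a 1 / a 3 else - a 2 / a 3)"
  have zY: "z i = Y y i" if "i < 4" for i
  proof -
    have "(a 0 * A i + a 1 * B i + a 2 * z' i) + a 3 * z i = 0" using R4[OF that] by simp
    hence ez: "a 3 * z i = - (a 0 * A i + a 1 * B i + a 2 * z' i)" by (simp only: add_eq_0_iff)
    have "z i = inverse (a 3) * (a 3 * z i)" using a3 by simp
    also have "\<dots> = Y y i" unfolding ez
      by (simp add: Y_def y_def divide_inverse algebra_simps)
    finally show ?thesis .
  qed
  have Tz: "tform 4 d j c P z = tform 4 d j c P (Y y)" for j by (rule tform_cong_z) (simp add: zY)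
  show "tform 4 d 3 c P z = 0"
  proof (cases "y 2 = 0")
    case True
    show ?thesis by (rule L1[of _ "y 0" "y 1"]) (use True zY d3 in \<open>auto simp: Y_def\<close>)
  next
    case False
    obtain \<psi>y where \<psi>y: "\<forall>j\<le>d - 1. tform 3 (d - 1) j h Q y = of_nat (fact j) * coeff \<psi>y j"
        "\<forall>j\<le>d. tform 4 d j c P (Y y) = of_nat (fact j) * coeff (smult (y 2) (pCons 0 \<psi>y)) j"
      using key[of y] by blast
    have "of_nat (fact 2) * (y 2 * coeff \<psi>y 1) = 0"
      using \<psi>y(2)[rule_format, of 2] zH Tz[of 2] d3 by (simp add: numeral_2_eq_2)
    hence "coeff \<psi>y 1 = 0" using f2 False by simp
    hence ly: "tform 3 (d - 1) 1 h Q y = 0" using \<psi>y(1)[rule_format, of 1] d3 by simp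
    define l where "l i = evalf 3 (d - 1 - 1) (pdf i h) Q" for i
    have T1' : "tform 3 (d - 1) 1 h Q x = (\<Sum>i<3. l i * x i)" for x unfolding l_def by (rule tform_one)
    obtain k' where k': "k' < 3" "l k' \<noteq> 0"
    proof -
      have "\<exists>k'<3. l k' \<noteq> 0"
      proof (rule ccontr)
        assume "\<not> (\<exists>k'<3. l k' \<noteq> 0)"
        hence "tform 3 (d - 1) 1 h Q e2 = 0" unfolding T1' by simp
        with le2 show False by simp
      qed
      thus ?thesis using that by blast
    qed
    have lQ: "tform 3 (d - 1) 1 h Q Q = 0"
    proof -
      have "poly 0 s = evalf 3 (d - 1) h (\<lambda>i. Q i + s * Q i)" for s
      proof -
        have "evalf 3 (d - 1) h (\<lambda>i. Q i + s * Q i) = evalf 3 (d - 1) h (\<lambda>i. (1 + s) * Q i)"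
          by (simp add: algebra_simps)
        also have "\<dots> = 0" unfolding evalf_homog HQ by simp
        finally show ?thesis by simp
      qed
      from taylor(1)[OF inf this, of 1] d3 show ?thesis by simp
    qed
    define u3 where "u3 j = (if j = 0 then Q else if j = 1 then v else y)" for j :: nat
    have ker3: "(\<Sum>i<3. l i * u3 j i) = 0" if "j < 3" for j
      using lQ v(2) ly unfolding T1'[symmetric] u3_def by auto
    have c32: "card ({..<3::nat} - {k'}) < card {..<3::nat}" using k'(1) by simp
    obtain b where b: "\<exists>j\<in>{..<3::nat}. b j \<noteq> 0" "\<forall>i\<in>{..<3} - {k'}. (\<Sum>j<3. b j * u3 j i) = 0"
      using dep[OF _ _ c32, of u3] by auto
    have Rk': "(\<Sum>j<3. b j * u3 j k') = 0"
    proof -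
      have "(\<Sum>i<3. l i * (\<Sum>j<3. b j * u3 j i)) = (\<Sum>j<3. b j * (\<Sum>i<3. l i * u3 j i))"
      proof -
      have "(\<Sum>i<3. l i * (\<Sum>j<3. b j * u3 j i)) = (\<Sum>i<3. \<Sum>j<3. l i * (b j * u3 j i))"
        by (simp add: sum_distrib_left)
      also have "\<dots> = (\<Sum>j<3. \<Sum>i<3. l i * (b j * u3 j i))" by (rule sum.swap)
      also have "\<dots> = (\<Sum>j<3. b j * (\<Sum>i<3. l i * u3 j i))" by (simp add: sum_distrib_left mult_ac)
      finally show ?thesis .
    qed
      also have "\<dots> = 0" using ker3 by simp
      finally have "(\<Sum>i<3. l i * (\<Sum>j<3. b j * u3 j i)) = 0" .
      moreover have "(\<Sum>i<3. l i * (\<Sum>j<3. b j * u3 j i)) = l k' * (\<Sum>j<3. b j * u3 j k')"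
        using k'(1) b(2) by (subst sum.remove[of _ k']) auto
      ultimately show ?thesis using k'(2) by simp
    qed
    have R3: "b 0 * Q i + b 1 * v i + b 2 * y i = 0" if "i < 3" for i
    proof -
      have "(\<Sum>j<3. b j * u3 j i) = 0" using Rk' b(2) that by (cases "i = k'") auto
      moreover have "{..<3::nat} = {0, 1, 2}" by auto
      ultimately show ?thesis by (simp add: u3_def add.assoc)
    qed
    have b2: "b 2 \<noteq> 0"
    proof
      assume "b 2 = 0"
      with R3 have "\<forall>i<3. b 0 * Q i + b 1 * v i = 0" by simp
      hence "b 0 = 0 \<and> b 1 = 0" using v(1) unfolding indep2_def by blast
      moreover have "{..<3::nat} = {0, 1, 2}" by auto
      ultimately show False using b(1) \<open>b 2 = 0\<close> by auto
    qed
    define \<alpha> where "\<alpha> = - b 0 / b 2"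
    define \<beta> where "\<beta> = - b 1 / b 2"
    have yab: "y i = \<alpha> * Q i + \<beta> * v i" if "i < 3" for i
    proof -
      have "(b 0 * Q i + b 1 * v i) + b 2 * y i = 0" using R3[OF that] by simp
      hence ez: "b 2 * y i = - (b 0 * Q i + b 1 * v i)" by (simp only: add_eq_0_iff)
      have "y i = inverse (b 2) * (b 2 * y i)" using b2 by simp
      also have "\<dots> = \<alpha> * Q i + \<beta> * v i" unfolding ez
        by (simp add: \<alpha>_def \<beta>_def divide_inverse algebra_simps)
      finally show ?thesis .
    qed
    have "Y y = (\<lambda>i. \<alpha> * P i + \<beta> * Y v i)"
      using yab[of 0] yab[of 1] yab[of 2]
      by (simp add: fun_eq_iff Y_def Q_def assms(6) algebra_simps)
    hence "tform 4 d 3 c P (Y y) = 0"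
      using binary[OF inf d3 \<psi>v(2)[rule_format] \<psi>v(3) cpw[unfolded pw_def], of \<alpha> \<beta>]
      by simp
    thus ?thesis using Tz by simp
  qed
qed


end
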